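(* Let $\mathscr{F}$ be a family of languages closed under product, union, Kleene closure and (left and right) division by finite [respectively, regular] languages. Let $S$ be a semigroup, let $\sigma : X^+ \to S$ be a choice of generators for $S$, and suppose that $L_\sigma(S) \in \mathscr{F}$. If $T$ is a finite [respectively, rational] ideal of $S$, then $L_{\sigma/T}(S/T) \in \mathscr{F}$.
   Context: For a semigroup $S$, $S^1$ denotes the monoid obtained by adjoining a new identity $1$ (even if $S$ already has one). A choice of generators for $S$ is a surjective morphism $\sigma : X^+ \to S$ from a free semigroup; it extends uniquely to $\sigma^1 : X^* \to S^1$. Let $\overline{X} = \{\overline{x} : x \in X\}$ be a set of formal inverses, $\hat{X} = X \cup \overline{X}$, with the involution $\overline{\overline{x}} = x$ and $\overline{x_1\cdots x_n} = \overline{x_n}\cdots\overline{x_1}$. The loop automaton of $S$ with respect to $\sigma$ is the directed labelled graph with vertex set $S^1$, having for each $a \in S^1$ and $x \in X$ an edge from $a$ to $a(x\sigma)$ labelled $x$ and an edge from $a(x\sigma)$ to $a$ labelled $\overline{x}$. The loop problem $L_\sigma(S) \subseteq \hat{X}^*$ is the set of words labelling paths from $1$ to $1$ in this graph (including the empty word). An ideal of $S$ is a subsemigroup $T$ with $S T \cup T S \subseteq T$. The Rees quotient $S/T$ has elements $(S\setminus T) \cup \{0\}$, with product equal to the $S$-product when that product lies outside $T$ and both factors are nonzero, and $0$ otherwise. The map $S \to S/T$ sending $s \notin T$ to $s$ and $s \in T$ to $0$ is a surjective morphism; composing $\sigma$ with it gives a choice of generators $\sigma/T : X^+ \to S/T$.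 A subset of $S$ is rational if it is the image of a regular language under a morphism from a finitely generated free monoid to $S$; a rational ideal is a rational subset which is an ideal. For languages $L, K$, division means $L K^{-1} = \{w : wk \in L \text{ for some } k \in K\}$ and $K^{-1}L = \{w : kw \in L \text{ for some } k \in K\}$. *)

theory Defs
  imports Main
begin

definition lang_conc :: "'a list set \<Rightarrow> 'a list set \<Rightarrow> 'a list set" where
  "lang_conc A B = {u @ v | u v. u \<in> A \<and> v \<in> B}"

inductive_set lang_star :: "'a list set \<Rightarrow> 'a list set" for A where
  star_Nil: "[] \<in> lang_star A"
| star_app: "u \<in> A \<Longrightarrow> v \<in> lang_star A \<Longrightarrow> u @ v \<in> lang_star A"

text \<open>Right division  L K^{-1} and left division K^{-1} L.\<close>
definition rdiv :: "'a list set \<Rightarrow> 'a list set \<Rightarrow> 'a list set" where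
  "rdiv L K = {w. \<exists>k\<in>K. w @ k \<in> L}"

definition ldiv :: "'a list set \<Rightarrow> 'a list set \<Rightarrow> 'a list set" where
  "ldiv K L = {w. \<exists>k\<in>K. k @ w \<in> L}"

inductive regular :: "'a list set \<Rightarrow> bool" where
  reg_finite: "finite L \<Longrightarrow> regular L"
| reg_union: "regular A \<Longrightarrow> regular B \<Longrightarrow> regular (A \<union> B)"
| reg_conc: "regular A \<Longrightarrow> regular B \<Longrightarrow> regular (lang_conc A B)"
| reg_star: "regular A \<Longrightarrow> regular (lang_star A)"

definition closed_rat_ops :: "'a list set set \<Rightarrow> bool" where
  "closed_rat_ops F \<longleftrightarrow>
     (\<forall>L\<in>F. \<forall>K\<in>F. lang_conc L K \<in> F \<and> L \<union> K \<in> F) \<and> (\<forall>L\<in>F. lang_star L \<in> F)"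

definition closed_div_by :: "('a list set \<Rightarrow> bool) \<Rightarrow> 'a list set set \<Rightarrow> bool" where
  "closed_div_by P F \<longleftrightarrow> (\<forall>L\<in>F. \<forall>K. P K \<longrightarrow> rdiv L K \<in> F \<and> ldiv K L \<in> F)"

definition semigroup_on :: "'s set \<Rightarrow> ('s \<Rightarrow> 's \<Rightarrow> 's) \<Rightarrow> bool" where
  "semigroup_on S mul \<longleftrightarrow> (\<forall>a\<in>S. \<forall>b\<in>S. mul a b \<in> S) \<and>
     (\<forall>a\<in>S. \<forall>b\<in>S. \<forall>c\<in>S. mul (mul a b) c = mul a (mul b c))"

text \<open>The monoid S^1: None is the adjoined identity 1.\<close>
definition one_carrier :: "'s set \<Rightarrow> 's option set" where
  "one_carrier S = insert None (Some ` S)"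

fun one_mul :: "('s \<Rightarrow> 's \<Rightarrow> 's) \<Rightarrow> 's option \<Rightarrow> 's option \<Rightarrow> 's option" where
  "one_mul mul None b = b"
| "one_mul mul (Some a) None = Some a"
| "one_mul mul (Some a) (Some b) = Some (mul a b)"

text \<open>The morphism sigma^1 : X^* \<rightarrow> S^1 induced by the images g x of the letters
  (the generating set X is the type 'x).\<close>
definition sigma1 :: "('s \<Rightarrow> 's \<Rightarrow> 's) \<Rightarrow> ('x \<Rightarrow> 's) \<Rightarrow> 'x list \<Rightarrow> 's option" where
  "sigma1 mul g w = foldr (\<lambda>x acc. one_mul mul (Some (g x)) acc) w None"

definition choice_of_generators :: "'s set \<Rightarrow> ('s \<Rightarrow> 's \<Rightarrow> 's) \<Rightarrow> ('x \<Rightarrow> 's) \<Rightarrow> bool" where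
  "choice_of_generators S mul g \<longleftrightarrow> (\<forall>x. g x \<in> S) \<and>
     Some ` S = sigma1 mul g ` {w. w \<noteq> []}"

text \<open>Letters of X-hat: (x, True) is x, (x, False) is its formal inverse.\<close>
fun loop_edge :: "'s set \<Rightarrow> ('s \<Rightarrow> 's \<Rightarrow> 's) \<Rightarrow> ('x \<Rightarrow> 's)
    \<Rightarrow> 's option \<Rightarrow> 'x \<times> bool \<Rightarrow> 's option \<Rightarrow> bool" where
  "loop_edge S mul g a (x, True) b \<longleftrightarrow> a \<in> one_carrier S \<and> b = one_mul mul a (Some (g x))"
| "loop_edge S mul g a (x, False) b \<longleftrightarrow> b \<in> one_carrier S \<and> a = one_mul mul b (Some (g x))"

fun loop_path :: "'s set \<Rightarrow> ('s \<Rightarrow> 's \<Rightarrow> 's) \<Rightarrow> ('x \<Rightarrow> 's)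
    \<Rightarrow> 's option \<Rightarrow> ('x \<times> bool) list \<Rightarrow> 's option \<Rightarrow> bool" where
  "loop_path S mul g a [] b \<longleftrightarrow> a = b \<and> a \<in> one_carrier S"
| "loop_path S mul g a (l # w) b \<longleftrightarrow> (\<exists>c. loop_edge S mul g a l c \<and> loop_path S mul g c w b)"

definition loop_problem :: "'s set \<Rightarrow> ('s \<Rightarrow> 's \<Rightarrow> 's) \<Rightarrow> ('x \<Rightarrow> 's) \<Rightarrow> ('x \<times> bool) list set" where
  "loop_problem S mul g = {w. loop_path S mul g None w None}"

definition semigroup_ideal :: "'s set \<Rightarrow> ('s \<Rightarrow> 's \<Rightarrow> 's) \<Rightarrow> 's set \<Rightarrow> bool" where
  "semigroup_ideal S mul T \<longleftrightarrow> T \<subseteq> S \<and> (\<forall>a\<in>T. \<forall>b\<in>T. mul a b \<in> T) \<and>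
     (\<forall>s\<in>S. \<forall>t\<in>T. mul s t \<in> T \<and> mul t s \<in> T)"

text \<open>Rees quotient S/T: Some s for s \<in> S - T, and None is the zero.\<close>
definition rees_carrier :: "'s set \<Rightarrow> 's set \<Rightarrow> 's option set" where
  "rees_carrier S T = insert None (Some ` (S - T))"

fun rees_mul :: "('s \<Rightarrow> 's \<Rightarrow> 's) \<Rightarrow> 's set \<Rightarrow> 's option \<Rightarrow> 's option \<Rightarrow> 's option" where
  "rees_mul mul T (Some a) (Some b) = (if mul a b \<in> T then None else Some (mul a b))"
| "rees_mul mul T _ _ = None"

definition rees_map :: "'s set \<Rightarrow> 's \<Rightarrow> 's option" where
  "rees_map T s = (if s \<in> T then None else Some s)"

definition rees_gen :: "'s set \<Rightarrow> ('x \<Rightarrow> 's) \<Rightarrow> 'x \<Rightarrow> 's option" where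
  "rees_gen T g x = rees_map T (g x)"

definition rational_subset :: "'s set \<Rightarrow> ('s \<Rightarrow> 's \<Rightarrow> 's) \<Rightarrow> 's set \<Rightarrow> bool" where
  "rational_subset S mul T \<longleftrightarrow>
     (\<exists>(A::nat set) (f::nat \<Rightarrow> 's option) (L::nat list set).
        finite A \<and> (\<forall>a\<in>A. f a \<in> one_carrier S) \<and> L \<subseteq> lists A \<and> regular L \<and>
        Some ` T = (\<lambda>w. foldr (\<lambda>a acc. one_mul mul (f a) acc) w None) ` L)"

end

theory Submission
  imports Defs
begin


definition flipl :: "'x \<times> bool \<Rightarrow> 'x \<times> bool" where "flipl l = (fst l, \<not> snd l)"
definition invw :: "('x \<times> bool) list \<Rightarrow> ('x \<times> bool) list" where
  "invw w = rev (map flipl w)"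

lemma invw_simps[simp]: "invw [] = []" "invw (l#w) = invw w @ [flipl l]"
  "invw (u@v) = invw v @ invw u" "invw (invw w) = w"
  by (auto simp: invw_def flipl_def rev_map[symmetric] comp_def)

lemma invw_concat: "invw (concat (map u w)) = concat (map (invw \<circ> u) (rev w))"
  by (induction w) auto

definition closedC :: "'s set \<Rightarrow> ('s \<Rightarrow> 's \<Rightarrow> 's) \<Rightarrow> ('x \<Rightarrow> 's) \<Rightarrow> bool" where
  "closedC S mul g \<longleftrightarrow> (\<forall>a\<in>one_carrier S. \<forall>x. one_mul mul a (Some (g x)) \<in> one_carrier S)"

lemma edge_ends: "closedC S mul g \<Longrightarrow> loop_edge S mul g a l c \<Longrightarrow> a \<in> one_carrier S \<and> c \<in> one_carrier S"
  by (cases l; cases "snd l") (auto simp: closedC_def)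

lemma path_ends: "closedC S mul g \<Longrightarrow> loop_path S mul g a w b \<Longrightarrow> a \<in> one_carrier S \<and> b \<in> one_carrier S"
proof (induction w arbitrary: a)
  case Nil then show ?case by auto
next
  case (Cons l w) then show ?case by (force dest: edge_ends)
qed

lemma path_append: "closedC S mul g \<Longrightarrow>
   loop_path S mul g a (u@v) c \<longleftrightarrow> (\<exists>b. loop_path S mul g a u b \<and> loop_path S mul g b v c)"
  by (induction u arbitrary: a) (auto dest: path_ends)

lemma path_inv: "closedC S mul g \<Longrightarrow> loop_path S mul g a w b \<Longrightarrow> loop_path S mul g b (invw w) a"
proof (induction w arbitrary: a)
  case Nil then show ?case by auto
next
  case (Cons l w)
  then obtain c where e: "loop_edge S mul g a l c" and p: "loop_path S mul g c w b" by auto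
  have ih: "loop_path S mul g b (invw w) c" using Cons p by blast
  have aC: "a \<in> one_carrier S" using edge_ends[OF Cons.prems(1) e] by simp
  have "loop_edge S mul g c (flipl l) a" using e aC
    by (cases l; cases "snd l") (auto simp: flipl_def)
  then have "loop_path S mul g c [flipl l] a" using aC by simp
  then show ?case using ih path_append[OF Cons.prems(1)] by auto
qed

lemma path_inv_iff: "closedC S mul g \<Longrightarrow> loop_path S mul g b (invw w) a \<longleftrightarrow> loop_path S mul g a w b"
  using path_inv[of S mul g a w b] path_inv[of S mul g b "invw w" a] by auto

inductive_cases star_cases: "w \<in> lang_star A"

lemma star_append: "x \<in> lang_star A \<Longrightarrow> y \<in> lang_star A \<Longrightarrow> x@y \<in> lang_star A"
  by (induction rule: lang_star.induct) (auto intro: lang_star.intros)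

lemma star_single: "x \<in> A \<Longrightarrow> x \<in> lang_star A"
  using lang_star.star_app[OF _ lang_star.star_Nil] by fastforce

lemma morph_star:
  assumes h0: "h [] = []" and happ: "\<And>u v. h (u@v) = h u @ h v"
  shows "h ` lang_star A = lang_star (h ` A)"
proof
  show "h ` lang_star A \<subseteq> lang_star (h ` A)"
  proof
    fix y assume "y \<in> h ` lang_star A"
    then obtain x where x: "x \<in> lang_star A" "y = h x" by auto
    from x(1) have "h x \<in> lang_star (h ` A)"
      by (induction rule: lang_star.induct) (auto simp: h0 happ intro: lang_star.intros)
    then show "y \<in> lang_star (h ` A)" using x by simp
  qed
  show "lang_star (h ` A) \<subseteq> h ` lang_star A"
  proof
    fix y assume "y \<in> lang_star (h ` A)"
    then show "y \<in> h ` lang_star A"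
    proof (induction rule: lang_star.induct)
      case star_Nil then show ?case using h0 lang_star.star_Nil by force
    next
      case (star_app u v)
      then obtain a b where "a \<in> A" "u = h a" "b \<in> lang_star A" "v = h b" by auto
      then have "u @ v = h (a @ b)" by (simp add: happ)
      moreover have "a @ b \<in> lang_star A" using \<open>a \<in> A\<close> \<open>b \<in> lang_star A\<close> by (rule lang_star.star_app)
      ultimately show ?case by blast
    qed
  qed
qed

lemma morph_conc:
  assumes happ: "\<And>u v. h (u@v) = h u @ h v"
  shows "h ` lang_conc A B = lang_conc (h ` A) (h ` B)"
proof -
  have "h xa @ h xb \<in> h ` {u @ v |u v. u \<in> A \<and> v \<in> B}" if "xa \<in> A" "xb \<in> B" for xa xb
  proof -
    have "h xa @ h xb = h (xa @ xb)" by (simp add: happ)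
    then show ?thesis using that by blast
  qed
  then show ?thesis unfolding lang_conc_def by (auto simp: happ) blast
qed

lemma reg_morph: "regular L \<Longrightarrow> regular ((\<lambda>w. concat (map u w)) ` L)"
proof (induction rule: regular.induct)
  case (reg_finite L) then show ?case by (auto intro: regular.intros)
next
  case (reg_union A B) then show ?case by (auto simp: image_Un intro: regular.intros)
next
  case (reg_conc A B) then show ?case
    by (subst morph_conc) (auto intro: regular.intros)
next
  case (reg_star A) then show ?case
    by (subst morph_star) (auto intro: regular.intros)
qed

lemma rev_star: "rev ` lang_star A = lang_star (rev ` A)"
proof
  show "rev ` lang_star A \<subseteq> lang_star (rev ` A)"
  proof
    fix y assume "y \<in> rev ` lang_star A"
    then obtain x where x: "x \<in> lang_star A" "y = rev x" by auto
    from x(1) have "rev x \<in> lang_star (rev ` A)"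
      by (induction rule: lang_star.induct)
        (auto intro: lang_star.intros star_append star_single)
    then show "y \<in> lang_star (rev ` A)" using x by simp
  qed
  show "lang_star (rev ` A) \<subseteq> rev ` lang_star A"
  proof
    fix y assume "y \<in> lang_star (rev ` A)"
    then show "y \<in> rev ` lang_star A"
    proof (induction rule: lang_star.induct)
      case star_Nil then show ?case using lang_star.star_Nil by force
    next
      case (star_app u v)
      then obtain a b where ab: "a \<in> A" "u = rev a" "b \<in> lang_star A" "v = rev b" by auto
      then have "b @ a \<in> lang_star A" by (auto intro: star_append star_single)
      then show ?case using ab by (metis image_eqI rev_append)
    qed
  qed
qed

lemma reg_rev: "regular L \<Longrightarrow> regular (rev ` L)"
proof (induction rule: regular.induct)
  case (reg_finite L) then show ?case by (auto intro: regular.intros)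
next
  case (reg_union A B) then show ?case by (auto simp: image_Un intro: regular.intros)
next
  case (reg_conc A B)
  have "rev ` lang_conc A B = lang_conc (rev ` B) (rev ` A)"
  proof -
    have "rev xa @ rev xb \<in> rev ` {u @ v |u v. u \<in> A \<and> v \<in> B}" if "xa \<in> B" "xb \<in> A" for xa xb
    proof -
      have "rev xa @ rev xb = rev (xb @ xa)" by simp
      then show ?thesis using that by blast
    qed
    then show ?thesis unfolding lang_conc_def by auto blast
  qed
  then show ?case using reg_conc by (auto intro: regular.intros)
next
  case (reg_star A) then show ?case
    by (subst rev_star) (auto intro: regular.intros)
qed



definition phi :: "'s set \<Rightarrow> 's option \<Rightarrow> 's option option" where
  "phi T a = (case a of None \<Rightarrow> None | Some s \<Rightarrow> Some (rees_map T s))"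

lemma phi_simps[simp]: "phi T None = None" "phi T (Some s) = Some (rees_map T s)"
  by (auto simp: phi_def)

lemma phi_zero: "phi T a = Some None \<longleftrightarrow> a \<in> Some ` T"
  by (cases a) (auto simp: rees_map_def)

lemma phi_inj: "a \<notin> Some ` T \<Longrightarrow> b \<notin> Some ` T \<Longrightarrow> phi T a = phi T b \<Longrightarrow> a = b"
  by (cases a; cases b) (auto simp: rees_map_def split: if_splits)

lemma one_mul_None_right[simp]: "one_mul mul a None = a"
  by (cases a) auto

lemma sigma1_Nil[simp]: "sigma1 mul g [] = None" by (simp add: sigma1_def)
lemma sigma1_Cons[simp]: "sigma1 mul g (x#w) = one_mul mul (Some (g x)) (sigma1 mul g w)"
  by (simp add: sigma1_def)

definition pos :: "'x list \<Rightarrow> ('x \<times> bool) list" where "pos xs = map (\<lambda>x. (x, True)) xs"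

locale setting =
  fixes S :: "'s set" and mul :: "'s \<Rightarrow> 's \<Rightarrow> 's" and g :: "'x \<Rightarrow> 's" and T :: "'s set"
  assumes sg: "semigroup_on S mul" and gS: "\<And>x. g x \<in> S" and id: "semigroup_ideal S mul T"
begin

lemma TS: "T \<subseteq> S" using id by (simp add: semigroup_ideal_def)
lemma Tl: "s \<in> S \<Longrightarrow> t \<in> T \<Longrightarrow> mul t s \<in> T" using id by (simp add: semigroup_ideal_def)
lemma Tr: "s \<in> S \<Longrightarrow> t \<in> T \<Longrightarrow> mul s t \<in> T" using id by (simp add: semigroup_ideal_def)
lemma mulS: "a \<in> S \<Longrightarrow> b \<in> S \<Longrightarrow> mul a b \<in> S" using sg by (simp add: semigroup_on_def)
lemma assoc: "a \<in> S \<Longrightarrow> b \<in> S \<Longrightarrow> c \<in> S \<Longrightarrow> mul (mul a b) c = mul a (mul b c)"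
  using sg by (simp add: semigroup_on_def)

lemma one_mul_C: "a \<in> one_carrier S \<Longrightarrow> b \<in> one_carrier S \<Longrightarrow> one_mul mul a b \<in> one_carrier S"
  by (cases a; cases b) (auto simp: one_carrier_def mulS)

lemma one_mul_assoc: "a \<in> one_carrier S \<Longrightarrow> b \<in> one_carrier S \<Longrightarrow> c \<in> one_carrier S \<Longrightarrow>
   one_mul mul (one_mul mul a b) c = one_mul mul a (one_mul mul b c)"
  by (cases a; cases b; cases c) (auto simp: one_carrier_def assoc)

lemma gC: "Some (g x) \<in> one_carrier S" by (simp add: one_carrier_def gS)

lemma closedS: "closedC S mul g"
  by (simp add: closedC_def one_mul_C gC)

lemma sigma1_C: "sigma1 mul g w \<in> one_carrier S"
  by (induction w) (auto simp: one_mul_C gC, simp add: one_carrier_def)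

lemma sigma1_append: "sigma1 mul g (u @ v) = one_mul mul (sigma1 mul g u) (sigma1 mul g v)"
  by (induction u) (auto simp: one_mul_assoc gC sigma1_C)

lemma path_pos: "a \<in> one_carrier S \<Longrightarrow>
   loop_path S mul g a (pos xs) b \<longleftrightarrow> b = one_mul mul a (sigma1 mul g xs)"
proof (induction xs arbitrary: a)
  case Nil then show ?case by (auto simp: pos_def)
next
  case (Cons x xs)
  have c: "one_mul mul a (Some (g x)) \<in> one_carrier S" using Cons.prems by (simp add: one_mul_C gC)
  have "loop_path S mul g a (pos (x#xs)) b \<longleftrightarrow> loop_path S mul g (one_mul mul a (Some (g x))) (pos xs) b"
    using Cons.prems by (simp add: pos_def)
  also have "\<dots> \<longleftrightarrow> b = one_mul mul (one_mul mul a (Some (g x))) (sigma1 mul g xs)"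
    using Cons.IH[OF c] .
  also have "one_mul mul (one_mul mul a (Some (g x))) (sigma1 mul g xs) = one_mul mul a (sigma1 mul g (x#xs))"
    using Cons.prems by (simp add: one_mul_assoc gC sigma1_C)
  finally show ?case .
qed

lemma path_pos_None: "loop_path S mul g None (pos xs) b \<longleftrightarrow> b = sigma1 mul g xs"
  using path_pos[of None xs b] by (simp add: one_carrier_def)

abbreviation "R \<equiv> rees_carrier S T"
abbreviation "rm \<equiv> rees_mul mul T"
abbreviation "rg \<equiv> rees_gen T g"

lemma rg_R: "rg x \<in> R" using gS[of x]
  by (auto simp: rees_gen_def rees_map_def rees_carrier_def)

lemma rm_R: "a \<in> R \<Longrightarrow> b \<in> R \<Longrightarrow> rm a b \<in> R"
  by (cases a; cases b) (auto simp: rees_carrier_def mulS)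

lemma closedR: "closedC R rm rg"
  unfolding closedC_def
proof (intro ballI allI)
  fix a x assume "a \<in> one_carrier R"
  then show "one_mul rm a (Some (rg x)) \<in> one_carrier R"
    using rg_R[of x] by (cases a) (auto simp: one_carrier_def rm_R)
qed

lemma phi_C: "a \<in> one_carrier S \<Longrightarrow> phi T a \<in> one_carrier R"
  by (cases a) (auto simp: one_carrier_def rees_carrier_def rees_map_def)

lemma zeroC: "Some None \<in> one_carrier R"
  by (simp add: one_carrier_def rees_carrier_def)

lemma phi_mul: "a \<in> one_carrier S \<Longrightarrow>
  phi T (one_mul mul a (Some (g x))) = one_mul rm (phi T a) (Some (rg x))"
  using gS[of x]
  by (cases a) (auto simp: one_carrier_def rees_gen_def rees_map_def Tl Tr)

lemma edge_phi: "loop_edge S mul g a l c \<Longrightarrow> loop_edge R rm rg (phi T a) l (phi T c)"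
  by (cases l; cases "snd l") (auto simp: phi_mul phi_C)

lemma path_phi: "loop_path S mul g a w b \<Longrightarrow> loop_path R rm rg (phi T a) w (phi T b)"
proof (induction w arbitrary: a)
  case Nil then show ?case by (auto simp: phi_C)
next
  case (Cons l w) then show ?case by (auto dest: edge_phi)
qed

lemma zero_loop: "loop_path R rm rg (Some None) z (Some None)"
proof (induction z)
  case Nil then show ?case by (simp add: zeroC)
next
  case (Cons l z)
  have "loop_edge R rm rg (Some None) l (Some None)"
    using zeroC by (cases l; cases "snd l") auto
  then show ?case using Cons by auto
qed

lemma first_zero:
  "a \<in> one_carrier S \<Longrightarrow> a \<notin> Some ` T \<Longrightarrow> loop_path R rm rg (phi T a) w b' \<Longrightarrow>
    (\<exists>b. loop_path S mul g a w b \<and> b \<notin> Some ` T \<and> b' = phi T b) \<or>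
    (\<exists>u z t. w = u @ z \<and> t \<in> T \<and> loop_path S mul g a u (Some t) \<and> loop_path R rm rg (Some None) z b')"
proof (induction w arbitrary: a)
  case Nil then show ?case by auto
next
  case (Cons l w)
  obtain x bb where l: "l = (x, bb)" by (cases l)
  from Cons.prems obtain c' where e: "loop_edge R rm rg (phi T a) l c'" and p: "loop_path R rm rg c' w b'"
    by auto
  show ?case
  proof (cases bb)
    case True
    define c where "c = one_mul mul a (Some (g x))"
    have cC: "c \<in> one_carrier S" using Cons.prems by (simp add: c_def one_mul_C gC)
    have c': "c' = phi T c" using e l True Cons.prems by (simp add: c_def phi_mul)
    have eS: "loop_edge S mul g a l c" using l True Cons.prems by (simp add: c_def)
    show ?thesis
    proof (cases "c \<in> Some ` T")
      case True
      then obtain t where t: "c = Some t" "t \<in> T" by auto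
      have "loop_path S mul g a [l] (Some t)" using eS cC t by simp
      moreover have "l # w = [l] @ w" by simp
      moreover have "loop_path R rm rg (Some None) w b'" using p c' t by (simp add: rees_map_def)
      ultimately show ?thesis using t by blast
    next
      case False
      from Cons.IH[OF cC False] p c' have
        "(\<exists>b. loop_path S mul g c w b \<and> b \<notin> Some ` T \<and> b' = phi T b) \<or>
         (\<exists>u z t. w = u @ z \<and> t \<in> T \<and> loop_path S mul g c u (Some t) \<and> loop_path R rm rg (Some None) z b')"
        by simp
      then show ?thesis
      proof
        assume "\<exists>b. loop_path S mul g c w b \<and> b \<notin> Some ` T \<and> b' = phi T b"
        then show ?thesis using eS by auto
      next
        assume "\<exists>u z t. w = u @ z \<and> t \<in> T \<and> loop_path S mul g c u (Some t) \<and> loop_path R rm rg (Some None) z b'"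
        then obtain u z t where "w = u @ z" "t \<in> T" "loop_path S mul g c u (Some t)" "loop_path R rm rg (Some None) z b'"
          by blast
        then show ?thesis using eS
          by (intro disjI2 exI[of _ "l # u"] exI[of _ z] exI[of _ t]) auto
      qed
    qed
  next
    case False
    have c'C: "c' \<in> one_carrier R" and pa: "phi T a = one_mul rm c' (Some (rg x))"
      using e l False by auto
    have anz: "phi T a \<noteq> Some None" using Cons.prems(2) phi_zero by metis
    have "c' \<noteq> Some None" using pa anz by auto
    have "\<exists>c. c \<in> one_carrier S \<and> c \<notin> Some ` T \<and> c' = phi T c"
    proof (cases c')
      case None then show ?thesis by (intro exI[of _ None]) (auto simp: one_carrier_def)
    next
      case (Some r)
      with \<open>c' \<noteq> Some None\<close> c'C obtain s where "r = Some s" "s \<in> S" "s \<notin> T"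
        by (auto simp: one_carrier_def rees_carrier_def)
      then show ?thesis using Some by (intro exI[of _ "Some s"]) (auto simp: one_carrier_def rees_map_def)
    qed
    then obtain c where cC: "c \<in> one_carrier S" and cT: "c \<notin> Some ` T" and c': "c' = phi T c"
      by blast
    have "phi T a = phi T (one_mul mul c (Some (g x)))" using pa c' cC by (simp add: phi_mul)
    moreover have "one_mul mul c (Some (g x)) \<notin> Some ` T" using calculation anz phi_zero by metis
    ultimately have aeq: "a = one_mul mul c (Some (g x))" using phi_inj Cons.prems(2) by metis
    have eS: "loop_edge S mul g a l c" using l False aeq cC by simp
    from Cons.IH[OF cC cT] p c' have
      "(\<exists>b. loop_path S mul g c w b \<and> b \<notin> Some ` T \<and> b' = phi T b) \<or>
       (\<exists>u z t. w = u @ z \<and> t \<in> T \<and> loop_path S mul g c u (Some t) \<and> loop_path R rm rg (Some None) z b')"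
      by simp
    then show ?thesis
    proof
      assume "\<exists>b. loop_path S mul g c w b \<and> b \<notin> Some ` T \<and> b' = phi T b"
      then show ?thesis using eS by auto
    next
      assume "\<exists>u z t. w = u @ z \<and> t \<in> T \<and> loop_path S mul g c u (Some t) \<and> loop_path R rm rg (Some None) z b'"
      then obtain u z t where "w = u @ z" "t \<in> T" "loop_path S mul g c u (Some t)" "loop_path R rm rg (Some None) z b'"
        by blast
      then show ?thesis using eS
        by (intro disjI2 exI[of _ "l # u"] exI[of _ z] exI[of _ t]) auto
    qed
  qed
qed

lemma last_zero:
  assumes "b \<in> one_carrier S" "b \<notin> Some ` T" "loop_path R rm rg (Some None) z (phi T b)"
  shows "\<exists>z1 z2 t. z = z1 @ z2 \<and> t \<in> T \<and> loop_path S mul g (Some t) z2 b"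
proof -
  have "loop_path R rm rg (phi T b) (invw z) (Some None)"
    using assms(3) path_inv[OF closedR] by blast
  from first_zero[OF assms(1,2) this] show ?thesis
  proof
    assume "\<exists>b'. loop_path S mul g b (invw z) b' \<and> b' \<notin> Some ` T \<and> Some None = phi T b'"
    then show ?thesis using phi_zero by metis
  next
    assume "\<exists>u z' t. invw z = u @ z' \<and> t \<in> T \<and> loop_path S mul g b u (Some t) \<and> loop_path R rm rg (Some None) z' (Some None)"
    then obtain u z' t where h: "invw z = u @ z'" "t \<in> T" "loop_path S mul g b u (Some t)" by blast
    have "z = invw z' @ invw u" using arg_cong[OF h(1), of invw] by simp
    moreover have "loop_path S mul g (Some t) (invw u) b" using h(3) path_inv[OF closedS] by blast
    ultimately show ?thesis using h(2) by blast
  qed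
qed

lemma charac:
  "w \<in> loop_problem R rm rg \<longleftrightarrow> w \<in> loop_problem S mul g \<or>
    (\<exists>u z v t t'. w = u @ z @ v \<and> t \<in> T \<and> t' \<in> T \<and> loop_path S mul g None u (Some t)
        \<and> loop_path S mul g (Some t') v None)"
proof
  assume "w \<in> loop_problem R rm rg"
  then have p: "loop_path R rm rg (phi T None) w (phi T None)" by (simp add: loop_problem_def)
  have nC: "None \<in> one_carrier S" "None \<notin> Some ` T" by (auto simp: one_carrier_def)
  from first_zero[OF nC p] show "w \<in> loop_problem S mul g \<or>
    (\<exists>u z v t t'. w = u @ z @ v \<and> t \<in> T \<and> t' \<in> T \<and> loop_path S mul g None u (Some t)
        \<and> loop_path S mul g (Some t') v None)"
  proof
    assume "\<exists>b. loop_path S mul g None w b \<and> b \<notin> Some ` T \<and> phi T None = phi T b"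
    then obtain b where "loop_path S mul g None w b" "b \<notin> Some ` T" "phi T None = phi T b" by blast
    then have "loop_path S mul g None w None" using phi_inj nC by metis
    then show ?thesis by (simp add: loop_problem_def)
  next
    assume "\<exists>u z t. w = u @ z \<and> t \<in> T \<and> loop_path S mul g None u (Some t) \<and> loop_path R rm rg (Some None) z (phi T None)"
    then obtain u z t where h: "w = u @ z" "t \<in> T" "loop_path S mul g None u (Some t)" "loop_path R rm rg (Some None) z (phi T None)"
      by blast
    from last_zero[OF nC h(4)] obtain z1 z2 t' where "z = z1 @ z2" "t' \<in> T" "loop_path S mul g (Some t') z2 None"
      by blast
    then show ?thesis using h by blast
  qed
next
  assume "w \<in> loop_problem S mul g \<or>
    (\<exists>u z v t t'. w = u @ z @ v \<and> t \<in> T \<and> t' \<in> T \<and> loop_path S mul g None u (Some t)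
        \<and> loop_path S mul g (Some t') v None)"
  then show "w \<in> loop_problem R rm rg"
  proof
    assume "w \<in> loop_problem S mul g"
    then show ?thesis using path_phi by (fastforce simp: loop_problem_def)
  next
    assume "\<exists>u z v t t'. w = u @ z @ v \<and> t \<in> T \<and> t' \<in> T \<and> loop_path S mul g None u (Some t)
        \<and> loop_path S mul g (Some t') v None"
    then obtain u z v t t' where h: "w = u @ z @ v" "t \<in> T" "t' \<in> T" "loop_path S mul g None u (Some t)"
        "loop_path S mul g (Some t') v None" by blast
    have 1: "loop_path R rm rg None u (Some None)" using path_phi[OF h(4)] h(2) by (simp add: rees_map_def)
    have 2: "loop_path R rm rg (Some None) v None" using path_phi[OF h(5)] h(3) by (simp add: rees_map_def)
    show ?thesis using 1 2 zero_loop[of z] h(1) path_append[OF closedR]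
      by (fastforce simp: loop_problem_def)
  qed
qed

end


context setting
begin

abbreviation "LS \<equiv> loop_problem S mul g"

lemma main_F:
  assumes cl: "closed_rat_ops F" and LS: "LS \<in> F"
    and A: "rdiv LS (invw ` V) \<in> F" and B: "ldiv V LS \<in> F"
    and M: "ldiv V (rdiv LS (invw ` V)) \<in> F"
    and V1: "\<forall>k\<in>V. \<forall>b. loop_path S mul g None k b \<longrightarrow> b \<in> Some ` T"
    and V2: "\<forall>t\<in>T. \<exists>k\<in>V. loop_path S mul g None k (Some t)"
  shows "loop_problem R rm rg \<in> F"
proof -
  note pa = path_append[OF closedS]
  note pi = path_inv_iff[OF closedS]
  have Aeq: "u \<in> rdiv LS (invw ` V) \<longleftrightarrow> (\<exists>t\<in>T. loop_path S mul g None u (Some t))" for u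
  proof
    assume "u \<in> rdiv LS (invw ` V)"
    then obtain k b where "k \<in> V" "loop_path S mul g None u b" "loop_path S mul g b (invw k) None"
      by (auto simp: rdiv_def loop_problem_def pa)
    then show "\<exists>t\<in>T. loop_path S mul g None u (Some t)" using V1 pi by blast
  next
    assume "\<exists>t\<in>T. loop_path S mul g None u (Some t)"
    then obtain t k where "t \<in> T" "loop_path S mul g None u (Some t)" "k \<in> V" "loop_path S mul g None k (Some t)"
      using V2 by blast
    then show "u \<in> rdiv LS (invw ` V)"
      by (auto simp: rdiv_def loop_problem_def pa pi)
  qed
  have Beq: "v \<in> ldiv V LS \<longleftrightarrow> (\<exists>t\<in>T. loop_path S mul g (Some t) v None)" for v
  proof
    assume "v \<in> ldiv V LS"
    then obtain k b where "k \<in> V" "loop_path S mul g None k b" "loop_path S mul g b v None"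
      by (auto simp: ldiv_def loop_problem_def pa)
    then show "\<exists>t\<in>T. loop_path S mul g (Some t) v None" using V1 by blast
  next
    assume "\<exists>t\<in>T. loop_path S mul g (Some t) v None"
    then obtain t k where "t \<in> T" "loop_path S mul g (Some t) v None" "k \<in> V" "loop_path S mul g None k (Some t)"
      using V2 by blast
    then show "v \<in> ldiv V LS"
      by (auto simp: ldiv_def loop_problem_def pa)
  qed
  have Meq: "z \<in> ldiv V (rdiv LS (invw ` V))" if tT: "t \<in> T" "t' \<in> T" and pz: "loop_path S mul g (Some t) z (Some t')"
    for z t t'
  proof -
    obtain k where k: "k \<in> V" "loop_path S mul g None k (Some t)" using bspec[OF V2 tT(1)] by blast
    obtain k' where k': "k' \<in> V" "loop_path S mul g None k' (Some t')" using bspec[OF V2 tT(2)] by blast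
    have "loop_path S mul g None ((k @ z) @ invw k') None"
      using k k' pz by (auto simp: pa pi)
    then show ?thesis using k k' by (auto simp: ldiv_def rdiv_def loop_problem_def)
  qed
  define Mset where "Mset = ldiv V (rdiv LS (invw ` V))"
  have allM: "z \<in> lang_star Mset" if Tne: "T \<noteq> {}" for z
  proof (induction z)
    case Nil then show ?case by (rule lang_star.star_Nil)
  next
    case (Cons l z)
    obtain t where t: "t \<in> T" using Tne by blast
    have tS: "t \<in> S" using t TS by blast
    obtain x bb where l: "l = (x, bb)" by (cases l)
    have "[l] \<in> Mset"
    proof (cases bb)
      case True
      have "loop_path S mul g (Some t) [l] (Some (mul t (g x)))"
        using l True tS by (simp add: one_carrier_def mulS gS)
      then show ?thesis unfolding Mset_def using Meq t Tl[OF gS t] by blast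
    next
      case False
      have "loop_path S mul g (Some (mul t (g x))) [l] (Some t)"
        using l False tS by (simp add: one_carrier_def)
      then show ?thesis unfolding Mset_def using Meq t Tl[OF gS t] by blast
    qed
    then show ?case using Cons lang_star.star_app[of "[l]" Mset z] by simp
  qed
  have eq: "loop_problem R rm rg = LS \<union> lang_conc (lang_conc (rdiv LS (invw ` V)) (lang_star Mset)) (ldiv V LS)"
  proof (cases "T = {}")
    case True
    have "rdiv LS (invw ` V) = {}" using Aeq True by blast
    then show ?thesis using charac True by (auto simp: lang_conc_def)
  next
    case False
    show ?thesis
    proof (rule set_eqI)
      fix w
      show "w \<in> loop_problem R rm rg \<longleftrightarrow> w \<in> LS \<union> lang_conc (lang_conc (rdiv LS (invw ` V)) (lang_star Mset)) (ldiv V LS)"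
      proof
        assume "w \<in> loop_problem R rm rg"
        then have "w \<in> LS \<or> (\<exists>u z v t t'. w = u @ z @ v \<and> t \<in> T \<and> t' \<in> T \<and> loop_path S mul g None u (Some t)
          \<and> loop_path S mul g (Some t') v None)" using charac by blast
        then show "w \<in> LS \<union> lang_conc (lang_conc (rdiv LS (invw ` V)) (lang_star Mset)) (ldiv V LS)"
        proof
          assume "\<exists>u z v t t'. w = u @ z @ v \<and> t \<in> T \<and> t' \<in> T \<and> loop_path S mul g None u (Some t)
            \<and> loop_path S mul g (Some t') v None"
          then obtain u z v t t' where h: "w = (u @ z) @ v" "t \<in> T" "t' \<in> T" "loop_path S mul g None u (Some t)"
            "loop_path S mul g (Some t') v None" by auto
          have "u \<in> rdiv LS (invw ` V)" using Aeq h by blast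
          moreover have "v \<in> ldiv V LS" using Beq h by blast
          moreover have "z \<in> lang_star Mset" using allM[OF False] .
          ultimately show ?thesis using h(1) unfolding lang_conc_def by blast
        qed simp
      next
        assume "w \<in> LS \<union> lang_conc (lang_conc (rdiv LS (invw ` V)) (lang_star Mset)) (ldiv V LS)"
        then show "w \<in> loop_problem R rm rg"
        proof
          assume "w \<in> lang_conc (lang_conc (rdiv LS (invw ` V)) (lang_star Mset)) (ldiv V LS)"
          then obtain u z v where h: "w = (u @ z) @ v" "u \<in> rdiv LS (invw ` V)" "v \<in> ldiv V LS"
            unfolding lang_conc_def by blast
          then obtain t t' where "t \<in> T" "t' \<in> T" "loop_path S mul g None u (Some t)"
            "loop_path S mul g (Some t') v None" using Aeq Beq by blast
          then show ?thesis using charac h(1) by auto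
        qed (use charac in blast)
      qed
    qed
  qed
  show ?thesis unfolding eq using cl LS A B M unfolding closed_rat_ops_def Mset_def by blast
qed

end


lemma pos_concat: "pos (concat xss) = concat (map pos xss)"
  by (induction xss) (auto simp: pos_def)

theorem proposition3p1:
  fixes F :: "('x \<times> bool) list set set"
    and S :: "'s set" and mul :: "'s \<Rightarrow> 's \<Rightarrow> 's" and g :: "'x \<Rightarrow> 's"
    and T :: "'s set"
  assumes "semigroup_on S mul"
    and "choice_of_generators S mul g"
    and "loop_problem S mul g \<in> F"
    and "semigroup_ideal S mul T"
  shows "(closed_rat_ops F \<and> closed_div_by finite F \<and> finite T
            \<longrightarrow> loop_problem (rees_carrier S T) (rees_mul mul T) (rees_gen T g) \<in> F)
       \<and> (closed_rat_ops F \<and> closed_div_by regular F \<and> rational_subset S mul T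
            \<longrightarrow> loop_problem (rees_carrier S T) (rees_mul mul T) (rees_gen T g) \<in> F)"
proof -
  have gS: "\<And>x. g x \<in> S" and surj: "Some ` S = sigma1 mul g ` {w. w \<noteq> []}"
    using assms(2) by (auto simp: choice_of_generators_def)
  interpret setting S mul g T using assms(1,4) gS by unfold_locales auto
  have rep: "\<exists>xs. sigma1 mul g xs = Some s" if "s \<in> S" for s
    using that surj by (metis (no_types, lifting) image_eqI image_iff)
  have repC: "\<exists>xs. sigma1 mul g xs = a" if "a \<in> one_carrier S" for a
  proof (cases a)
    case None then show ?thesis by (intro exI[of _ "[]"]) simp
  next
    case (Some s) then show ?thesis using rep that by (auto simp: one_carrier_def)
  qed
  have fin: "loop_problem R rm rg \<in> F"
    if cl: "closed_rat_ops F" and cd: "closed_div_by finite F" and fT: "finite T"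
  proof -
    define r where "r t = (SOME xs. sigma1 mul g xs = Some t)" for t
    have r: "sigma1 mul g (r t) = Some t" if "t \<in> T" for t
      unfolding r_def using rep[of t] that TS by (metis (mono_tags, lifting) someI_ex subsetD)
    define V where "V = (\<lambda>t. pos (r t)) ` T"
    have V1: "\<forall>k\<in>V. \<forall>b. loop_path S mul g None k b \<longrightarrow> b \<in> Some ` T"
      using r by (auto simp: V_def path_pos_None)
    have V2: "\<forall>t\<in>T. \<exists>k\<in>V. loop_path S mul g None k (Some t)"
      using r by (auto simp: V_def path_pos_None)
    have fV: "finite V" "finite (invw ` V)" using fT by (auto simp: V_def)
    have A: "rdiv LS (invw ` V) \<in> F" using cd assms(3) fV by (simp add: closed_div_by_def)
    have B: "ldiv V LS \<in> F" using cd assms(3) fV by (simp add: closed_div_by_def)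
    have M: "ldiv V (rdiv LS (invw ` V)) \<in> F" using cd A fV by (simp add: closed_div_by_def)
    show ?thesis using main_F[OF cl assms(3) A B M V1 V2] .
  qed
  have rat: "loop_problem R rm rg \<in> F"
    if cl: "closed_rat_ops F" and cd: "closed_div_by regular F" and rT: "rational_subset S mul T"
  proof -
    obtain A0 :: "nat set" and f :: "nat \<Rightarrow> 's option" and L0 :: "nat list set" where
      h: "finite A0" "\<forall>a\<in>A0. f a \<in> one_carrier S" "L0 \<subseteq> lists A0" "regular L0"
      "Some ` T = (\<lambda>w. foldr (\<lambda>a acc. one_mul mul (f a) acc) w None) ` L0"
      using rT unfolding rational_subset_def by (elim exE conjE) (rule that, assumption+)
    define ev where "ev w = foldr (\<lambda>a acc. one_mul mul (f a) acc) w None" for w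
    define repA where "repA a = (SOME xs. sigma1 mul g xs = f a)" for a
    have repA: "sigma1 mul g (repA a) = f a" if "a \<in> A0" for a
      unfolding repA_def using repC[of "f a"] h(2) that by (metis (mono_tags, lifting) someI_ex)
    define hh where "hh w = concat (map repA w)" for w
    have hh: "sigma1 mul g (hh w) = ev w" if "set w \<subseteq> A0" for w
      using that by (induction w) (auto simp: hh_def ev_def sigma1_append repA)
    define V where "V = (\<lambda>w. pos (hh w)) ` L0"
    have V1: "\<forall>k\<in>V. \<forall>b. loop_path S mul g None k b \<longrightarrow> b \<in> Some ` T"
    proof (intro ballI allI impI)
      fix k b assume "k \<in> V" "loop_path S mul g None k b"
      then obtain w where "w \<in> L0" "b = sigma1 mul g (hh w)" by (auto simp: V_def path_pos_None)
      moreover then have "set w \<subseteq> A0" using h(3) by auto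
      ultimately show "b \<in> Some ` T" using hh h(5) by (auto simp: ev_def)
    qed
    have V2: "\<forall>t\<in>T. \<exists>k\<in>V. loop_path S mul g None k (Some t)"
    proof
      fix t assume "t \<in> T"
      then obtain w where w: "w \<in> L0" "Some t = ev w" using h(5) unfolding ev_def by auto
      then have "set w \<subseteq> A0" using h(3) by auto
      then have "loop_path S mul g None (pos (hh w)) (Some t)" using w hh by (simp add: path_pos_None)
      then show "\<exists>k\<in>V. loop_path S mul g None k (Some t)" using w(1) by (auto simp: V_def)
    qed
    have Veq: "V = (\<lambda>w. concat (map (pos \<circ> repA) w)) ` L0"
      by (auto simp: V_def hh_def pos_concat)
    have rV: "regular V" unfolding Veq by (rule reg_morph[OF h(4)])
    have "invw ` V = (\<lambda>w. concat (map (invw \<circ> (pos \<circ> repA)) w)) ` (rev ` L0)"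
      unfolding Veq by (auto simp: invw_concat image_image)
    then have rV': "regular (invw ` V)" using reg_morph[OF reg_rev[OF h(4)]] by simp
    have A: "rdiv LS (invw ` V) \<in> F" using cd assms(3) rV' by (simp add: closed_div_by_def)
    have B: "ldiv V LS \<in> F" using cd assms(3) rV by (simp add: closed_div_by_def)
    have M: "ldiv V (rdiv LS (invw ` V)) \<in> F" using cd A rV by (simp add: closed_div_by_def)
    show ?thesis using main_F[OF cl assms(3) A B M V1 V2] .
  qed
  show ?thesis using fin rat by blast
qed


end
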